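(* Let $T>0$ and $X_1^{per}=\{v\in H^1(0,T): v(0)=v(T),\ \max_{[0,T]}v+\min_{[0,T]}v=0\}$, $I_1^{per}(v)=\int_0^T v'^2/\|v\|_\infty^2$. Then $I_1^{per}(u)\ge 16/T$ for every $u\in X_1^{per}\setminus\{0\}$, and if $u\in X_1^{per}\setminus\{0\}$ satisfies $I_1^{per}(u)=16/T$, then there exist a constant $c\neq0$ and $x_0\in[0,T]$ such that $u(x)=c\,w(x+x_0)$ for $x\in[0,T]$, where $w$ is the $T$-periodic extension to $\mathbb R$ of $$w(x)=\begin{cases}x,&0\le x\le T/4,\\ -(x-T/2),&T/4\le x\le 3T/4,\\ x-T,&3T/4\le x\le T.\end{cases}$$
   Context: $H^1(0,T)$ is the usual Sobolev space of real-valued functions; elements are identified with their continuous representatives. *)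

theory Defs
  imports "HOL-Analysis.Analysis"
begin

definition test_fun :: "real \<Rightarrow> (real \<Rightarrow> real) \<Rightarrow> bool" where
  "test_fun T \<phi> \<longleftrightarrow> (\<forall>n x. ((deriv ^^ n) \<phi>) differentiable (at x))
      \<and> closure {x. \<phi> x \<noteq> 0} \<subseteq> {0<..<T}"

definition L2 :: "real \<Rightarrow> (real \<Rightarrow> real) \<Rightarrow> bool" where
  "L2 T g \<longleftrightarrow> set_borel_measurable lborel {0<..<T} g
      \<and> set_integrable lborel {0<..<T} (\<lambda>x. (g x)\<^sup>2)"

definition is_weak_deriv :: "real \<Rightarrow> (real \<Rightarrow> real) \<Rightarrow> (real \<Rightarrow> real) \<Rightarrow> bool" where
  "is_weak_deriv T v g \<longleftrightarrow> L2 T g \<and>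
     (\<forall>\<phi>. test_fun T \<phi> \<longrightarrow>
        (LINT x:{0<..<T}|lborel. v x * deriv \<phi> x) = - (LINT x:{0<..<T}|lborel. g x * \<phi> x))"

text \<open>H^1(0,T), elements identified with their continuous representatives on [0,T].\<close>
definition H1 :: "real \<Rightarrow> (real \<Rightarrow> real) \<Rightarrow> bool" where
  "H1 T v \<longleftrightarrow> continuous_on {0..T} v \<and> L2 T v \<and> (\<exists>g. is_weak_deriv T v g)"

definition wderiv :: "real \<Rightarrow> (real \<Rightarrow> real) \<Rightarrow> real \<Rightarrow> real" where
  "wderiv T v = (SOME g. is_weak_deriv T v g)"

definition supnorm :: "real \<Rightarrow> (real \<Rightarrow> real) \<Rightarrow> real" where
  "supnorm T v = Sup ((\<lambda>x. \<bar>v x\<bar>) ` {0..T})"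

definition X1per :: "real \<Rightarrow> (real \<Rightarrow> real) set" where
  "X1per T = {v. H1 T v \<and> v 0 = v T \<and> Sup (v ` {0..T}) + Inf (v ` {0..T}) = 0}"

definition I1per :: "real \<Rightarrow> (real \<Rightarrow> real) \<Rightarrow> real" where
  "I1per T v = (LINT x:{0<..<T}|lborel. (wderiv T v x)\<^sup>2) / (supnorm T v)\<^sup>2"

definition w0 :: "real \<Rightarrow> real \<Rightarrow> real" where
  "w0 T x = (if x \<le> T/4 then x else if x \<le> 3*T/4 then -(x - T/2) else x - T)"

definition wper :: "real \<Rightarrow> real \<Rightarrow> real" where
  "wper T x = w0 T (x - T * of_int \<lfloor>x / T\<rfloor>)"

end

theory Submission
  imports Defs
begin


lemma rdiff: "(f::real\<Rightarrow>real) differentiable at x \<longleftrightarrow> f field_differentiable at x"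
  by (simp add: real_differentiable_def field_differentiable_def)

definition Cn :: "nat \<Rightarrow> (real \<Rightarrow> real) \<Rightarrow> bool" where
  "Cn n f \<longleftrightarrow> (\<forall>m\<le>n. \<forall>x. (deriv ^^ m) f differentiable (at x))"

lemma Cn_0: "Cn 0 f \<longleftrightarrow> (\<forall>x. f differentiable (at x))"
  by (simp add: Cn_def)

lemma Cn_Suc: "Cn (Suc n) f \<longleftrightarrow> (\<forall>x. f differentiable (at x)) \<and> Cn n (deriv f)"
proof
  assume A: "Cn (Suc n) f"
  then have "\<forall>x. f differentiable (at x)" unfolding Cn_def by (metis funpow_0 le0)
  moreover have "Cn n (deriv f)" unfolding Cn_def
  proof (intro allI impI)
    fix m x assume "m \<le> n"
    then have "(deriv ^^ Suc m) f differentiable (at x)" using A unfolding Cn_def by auto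
    then show "(deriv ^^ m) (deriv f) differentiable (at x)" by (simp add: funpow_Suc_right del: funpow.simps)
  qed
  ultimately show "(\<forall>x. f differentiable (at x)) \<and> Cn n (deriv f)" by blast
next
  assume A: "(\<forall>x. f differentiable (at x)) \<and> Cn n (deriv f)"
  show "Cn (Suc n) f" unfolding Cn_def
  proof (intro allI impI)
    fix m x assume m: "m \<le> Suc n"
    show "(deriv ^^ m) f differentiable (at x)"
    proof (cases m)
      case 0 then show ?thesis using A by simp
    next
      case (Suc k)
      then have "(deriv ^^ k) (deriv f) differentiable (at x)" using A m unfolding Cn_def by auto
      then show ?thesis using Suc by (simp add: funpow_Suc_right del: funpow.simps)
    qed
  qed
qed

lemma Cn_diff: "Cn n f \<Longrightarrow> f differentiable (at x)"
  by (cases n) (auto simp: Cn_0 Cn_Suc)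

lemma Cn_mono: "Cn (Suc n) f \<Longrightarrow> Cn n f"
  unfolding Cn_def by auto

lemma Cn_const: "Cn n (\<lambda>x. c)"
proof (induction n arbitrary: c)
  case 0 then show ?case by (simp add: Cn_0)
next
  case (Suc n)
  have "deriv (\<lambda>x. c) = (\<lambda>x. 0)" by (rule ext) simp
  then show ?case using Suc by (simp add: Cn_Suc)
qed

lemma Cn_id: "Cn n (\<lambda>x. x)"
proof (cases n)
  case 0 then show ?thesis by (simp add: Cn_0)
next
  case (Suc k)
  have "deriv (\<lambda>x. x) = (\<lambda>x. 1)" by (rule ext) simp
  then show ?thesis using Suc by (simp add: Cn_Suc Cn_const)
qed

lemma Cn_add: "Cn n f \<Longrightarrow> Cn n g \<Longrightarrow> Cn n (\<lambda>x. f x + g x)"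
proof (induction n arbitrary: f g)
  case 0 then show ?case by (simp add: Cn_0)
next
  case (Suc n)
  have "deriv (\<lambda>x. f x + g x) = (\<lambda>x. deriv f x + deriv g x)"
    using Suc.prems by (intro ext deriv_add) (auto simp: Cn_Suc rdiff)
  then show ?case using Suc by (auto simp: Cn_Suc)
qed

lemma Cn_mult: "Cn n f \<Longrightarrow> Cn n g \<Longrightarrow> Cn n (\<lambda>x. f x * g x)"
proof (induction n arbitrary: f g)
  case 0 then show ?case by (simp add: Cn_0)
next
  case (Suc n)
  have "deriv (\<lambda>x. f x * g x) = (\<lambda>x. f x * deriv g x + deriv f x * g x)"
    using Suc.prems by (intro ext deriv_mult) (auto simp: Cn_Suc rdiff)
  moreover have "Cn n (\<lambda>x. f x * deriv g x + deriv f x * g x)"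
    using Suc Cn_mono[OF Suc.prems(1)] Cn_mono[OF Suc.prems(2)] by (intro Cn_add Suc.IH) (auto simp: Cn_Suc)
  ultimately show ?case using Suc by (auto simp: Cn_Suc)
qed

lemma Cn_compose_diff: "Cn n f \<Longrightarrow> Cn n g \<Longrightarrow> (\<lambda>x. f (g x)) differentiable (at x)"
proof -
  assume f: "Cn n f" and g: "Cn n g"
  have "(f \<circ> g) differentiable (at x)"
    by (rule differentiable_chain_at) (rule Cn_diff[OF g], rule Cn_diff[OF f])
  then show ?thesis by (simp add: o_def)
qed

lemma Cn_compose: "Cn n f \<Longrightarrow> Cn n g \<Longrightarrow> Cn n (\<lambda>x. f (g x))"
proof (induction n arbitrary: f g)
  case 0 then show ?case using Cn_compose_diff[of 0 f g] by (simp add: Cn_0)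
next
  case (Suc n)
  have d: "deriv (\<lambda>x. f (g x)) = (\<lambda>x. deriv f (g x) * deriv g x)"
  proof
    fix x
    have "deriv (f \<circ> g) x = deriv f (g x) * deriv g x"
      by (rule deriv_chain) (simp_all only: rdiff[symmetric] Cn_diff[OF Suc.prems(2)] Cn_diff[OF Suc.prems(1)])
    then show "deriv (\<lambda>x. f (g x)) x = deriv f (g x) * deriv g x" by (simp add: o_def)
  qed
  have "Cn n (deriv f)" "Cn n g" "Cn n (deriv g)"
    using Suc.prems Cn_mono[OF Suc.prems(2)] by (simp_all add: Cn_Suc)
  then have "Cn n (\<lambda>x. deriv f (g x) * deriv g x)"
    using Cn_mult[OF Suc.IH[of "deriv f" g]] by blast
  then show ?case using Cn_compose_diff[OF Suc.prems] by (simp add: Cn_Suc d)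
qed

lemma Cn_minus: "Cn n f \<Longrightarrow> Cn n g \<Longrightarrow> Cn n (\<lambda>x. f x - g x)"
proof -
  assume "Cn n f" "Cn n g"
  then have "Cn n (\<lambda>x. f x + (-1) * g x)" by (intro Cn_add Cn_mult Cn_const)
  then show ?thesis by simp
qed

lemma Cn_inverse: "Cn n f \<Longrightarrow> (\<forall>x. f x \<noteq> 0) \<Longrightarrow> Cn n (\<lambda>x. inverse (f x))"
proof (induction n arbitrary: f)
  case 0 then show ?case by (auto simp: Cn_0 intro!: derivative_intros)
next
  case (Suc n)
  have d: "deriv (\<lambda>x. inverse (f x)) = (\<lambda>x. (-1) * deriv f x * (inverse (f x) * inverse (f x)))"
  proof
    fix x
    have "f differentiable at x" using Suc.prems by (auto simp: Cn_Suc)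
    then obtain D where D: "(f has_real_derivative D) (at x)" by (auto simp: real_differentiable_def)
    then have "((\<lambda>x. inverse (f x)) has_real_derivative (-1) * D * (inverse (f x) * inverse (f x))) (at x)"
      using Suc.prems by (auto intro!: derivative_eq_intros simp: power2_eq_square)
    then show "deriv (\<lambda>x. inverse (f x)) x = (-1) * deriv f x * (inverse (f x) * inverse (f x))"
      using D by (simp add: DERIV_imp_deriv)
  qed
  have "Cn n (\<lambda>x. (-1) * deriv f x * (inverse (f x) * inverse (f x)))"
    using Suc Cn_mono[OF Suc.prems(1)] by (intro Cn_mult Cn_const Suc.IH) (auto simp: Cn_Suc)
  moreover have "(\<lambda>x. inverse (f x)) differentiable at x" for x
    using Suc.prems by (auto simp: Cn_Suc intro!: derivative_intros)
  ultimately show ?case by (simp add: Cn_Suc d)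
qed

definition Fk :: "nat \<Rightarrow> real \<Rightarrow> real" where
  "Fk k x = (if x > 0 then inverse x ^ k * exp (- inverse x) else 0)"

lemma Fk_lim: "((\<lambda>y. Fk k y) \<longlongrightarrow> 0) (at_right 0)"
proof -
  have "((\<lambda>z. z ^ k / exp z) \<longlongrightarrow> (0::real)) at_top" by (rule tendsto_power_div_exp_0)
  then have "((\<lambda>y. inverse y ^ k / exp (inverse y)) \<longlongrightarrow> (0::real)) (at_right 0)"
    using filterlim_inverse_at_top_right by (rule filterlim_compose)
  moreover have "eventually (\<lambda>y. inverse y ^ k / exp (inverse y) = Fk k y) (at_right (0::real))"
    by (auto simp: eventually_at_right_less Fk_def exp_minus field_simps intro!: eventually_mono[OF eventually_at_right_less[of 0]])
  ultimately show ?thesis by (rule Lim_transform_eventually)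
qed

lemma Fk_deriv: "(Fk k has_real_derivative (Fk (k+2) x - real k * Fk (k+1) x)) (at x)"
proof (cases "x > 0")
  case True
  have "((\<lambda>x. inverse x ^ k * exp (- inverse x)) has_real_derivative (Fk (k+2) x - real k * Fk (k+1) x)) (at x)"
    using True
    apply (intro derivative_eq_intros refl)
    apply (auto simp: Fk_def)
    apply (cases k, auto)
    done
  then show ?thesis
    by (rule has_field_derivative_transform_within_open[where S="{0<..}"]) (use True in \<open>auto simp: Fk_def\<close>)
next
  case False
  show ?thesis
  proof (cases "x < 0")
    case True
    have "((\<lambda>x. 0) has_real_derivative 0) (at x)" by simp
    then have "(Fk k has_real_derivative 0) (at x)"
      by (rule has_field_derivative_transform_within_open[where S="{..<0}"]) (use True in \<open>auto simp: Fk_def\<close>)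
    then show ?thesis using True by (simp add: Fk_def)
  next
    case False
    then have x0: "x = 0" using \<open>\<not> x > 0\<close> by simp
    have "((\<lambda>y. (Fk k y - Fk k 0) / (y - 0)) \<longlongrightarrow> 0) (at 0)"
    proof (rule filterlim_split_at)
      have "eventually (\<lambda>y. 0 = (Fk k y - Fk k 0) / (y - 0)) (at_left (0::real))"
        by (auto simp: Fk_def intro!: eventually_mono[OF eventually_at_left_real[of "-1" 0]])
      then show "((\<lambda>y. (Fk k y - Fk k 0) / (y - 0)) \<longlongrightarrow> 0) (at_left 0)"
        by (rule Lim_transform_eventually[rotated]) simp
      have "eventually (\<lambda>y. Fk (k+1) y = (Fk k y - Fk k 0) / (y - 0)) (at_right (0::real))"
        by (auto simp: Fk_def field_simps intro!: eventually_mono[OF eventually_at_right_less[of 0]])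
      then show "((\<lambda>y. (Fk k y - Fk k 0) / (y - 0)) \<longlongrightarrow> 0) (at_right 0)"
        using Fk_lim[of "k+1"] by (rule Lim_transform_eventually[rotated])
    qed
    then show ?thesis using x0 by (simp add: has_field_derivative_iff Fk_def)
  qed
qed

lemma Cn_Fk: "Cn n (Fk k)"
proof (induction n arbitrary: k)
  case 0 then show ?case using Fk_deriv by (auto simp: Cn_0 real_differentiable_def)
next
  case (Suc n)
  have "deriv (Fk k) = (\<lambda>x. Fk (k+2) x - real k * Fk (k+1) x)"
    using Fk_deriv by (intro ext DERIV_imp_deriv)
  moreover have "Cn n (\<lambda>x. Fk (k+2) x - real k * Fk (k+1) x)"
    by (intro Cn_minus Cn_mult Cn_const Suc.IH)
  ultimately show ?case using Fk_deriv by (auto simp: Cn_Suc real_differentiable_def)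
qed

lemma Cn_affine: "Cn n (\<lambda>x. p * x + q)"
  by (intro Cn_add Cn_mult Cn_const Cn_id)

definition St :: "real \<Rightarrow> real" where
  "St x = Fk 0 x * inverse (Fk 0 x + Fk 0 (1 - x))"

lemma Fk0_nonneg: "Fk 0 x \<ge> 0"
  by (simp add: Fk_def)

lemma Fk0_pos: "x > 0 \<Longrightarrow> Fk 0 x > 0"
  by (simp add: Fk_def)

lemma Fk0_mono: "x \<le> y \<Longrightarrow> Fk 0 x \<le> Fk 0 y"
  by (auto simp: Fk_def intro: le_imp_inverse_le)

lemma St_den_pos: "Fk 0 x + Fk 0 (1 - x) > 0"
proof (cases "x > 0")
  case True then show ?thesis using Fk0_pos[of x] Fk0_nonneg[of "1-x"] by linarith
next
  case False then show ?thesis using Fk0_pos[of "1-x"] Fk0_nonneg[of x] by linarith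
qed

lemma Cn_St: "Cn n St"
proof -
  have "Cn n (\<lambda>x. Fk 0 x * inverse (Fk 0 x + Fk 0 (1 - x)))"
  proof (intro Cn_mult Cn_Fk Cn_inverse Cn_add)
    show "Cn n (\<lambda>x. Fk 0 (1 - x))"
      using Cn_compose[OF Cn_Fk Cn_affine[of n "-1" 1]] by simp
    show "\<forall>x. Fk 0 x + Fk 0 (1 - x) \<noteq> 0" using St_den_pos by (metis less_irrefl)
  qed
  then show ?thesis by (simp add: St_def[abs_def])
qed

lemma St_0: "x \<le> 0 \<Longrightarrow> St x = 0"
  by (simp add: St_def Fk_def)

lemma St_1: "x \<ge> 1 \<Longrightarrow> St x = 1"
  using St_den_pos[of x] by (simp add: St_def Fk_def)

lemma St_bounds: "0 \<le> St x" "St x \<le> 1"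
  using St_den_pos[of x] Fk0_nonneg[of x] Fk0_nonneg[of "1-x"]
  by (auto simp: St_def field_simps)

lemma St_mono: "x \<le> y \<Longrightarrow> St x \<le> St y"
proof -
  assume xy: "x \<le> y"
  have px: "Fk 0 x + Fk 0 (1 - x) > 0" and py: "Fk 0 y + Fk 0 (1 - y) > 0" by (rule St_den_pos)+
  have "Fk 0 x * Fk 0 (1 - y) \<le> Fk 0 y * Fk 0 (1 - x)"
    by (intro mult_mono Fk0_mono Fk0_nonneg) (use xy in auto)
  then have "Fk 0 x * (Fk 0 y + Fk 0 (1 - y)) \<le> Fk 0 y * (Fk 0 x + Fk 0 (1 - x))"
    by (simp add: algebra_simps)
  then show "St x \<le> St y" using px py
    by (simp add: St_def divide_simps field_simps del: Fk_def)
qed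

lemma St_has_deriv: "(St has_real_derivative deriv St x) (at x)"
  using Cn_diff[OF Cn_St[of 0]] by (simp add: DERIV_deriv_iff_real_differentiable)

lemma dSt_cont: "continuous_on A (deriv St)"
proof -
  have "Cn 0 (deriv St)" using Cn_St[of 1] by (simp add: Cn_Suc)
  then show ?thesis
    by (intro continuous_at_imp_continuous_on ballI differentiable_imp_continuous_within) (simp add: Cn_0)
qed

lemma dSt_nonneg: "deriv St x \<ge> 0"
proof -
  have "((\<lambda>y. (St y - St x) / (y - x)) \<longlongrightarrow> deriv St x) (at x)"
    using St_has_deriv[of x] by (simp add: has_field_derivative_iff)
  moreover have "eventually (\<lambda>y. 0 \<le> (St y - St x) / (y - x)) (at x)"
  proof -
    have "\<forall>y. y \<noteq> x \<and> dist y x < 1 \<longrightarrow> 0 \<le> (St y - St x) / (y - x)"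
    proof (intro allI impI)
      fix y assume "y \<noteq> x \<and> dist y x < 1"
      then show "0 \<le> (St y - St x) / (y - x)"
        using St_mono[of x y] St_mono[of y x] by (cases "x < y") (auto simp: divide_simps)
    qed
    then show ?thesis unfolding eventually_at by (intro exI[of _ 1]) auto
  qed
  ultimately show ?thesis by (rule tendsto_lowerbound) simp
qed

lemma dSt_zero: assumes "t < 0 \<or> t > 1" shows "deriv St t = 0"
proof -
  have "(St has_real_derivative 0) (at t)"
  proof (cases "t < 0")
    case True
    have "((\<lambda>x. 0) has_real_derivative 0) (at t)" by simp
    then show ?thesis
      by (rule has_field_derivative_transform_within_open[where S="{..<0}"]) (use True St_0 in auto)
  next
    case False
    then have "t > 1" using assms by auto
    have "((\<lambda>x. 1) has_real_derivative 0) (at t)" by simp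
    then show ?thesis
      by (rule has_field_derivative_transform_within_open[where S="{1<..}"]) (use \<open>t>1\<close> St_1 in auto)
  qed
  then show ?thesis by (rule DERIV_imp_deriv)
qed


lemma St_comp_deriv:
  assumes "e > 0"
  shows "((\<lambda>x. St ((x - c) / e)) has_real_derivative deriv St ((x - c) / e) / e) (at x)"
proof -
  have "((\<lambda>x. St ((x - c) / e)) has_real_derivative deriv St ((x - c) / e) * (1 / e)) (at x)"
    by (rule DERIV_chain2[OF St_has_deriv]) (use assms in \<open>auto intro!: derivative_eq_intros\<close>)
  then show ?thesis by simp
qed

lemma dSt_comp_cont: "e \<noteq> 0 \<Longrightarrow> continuous_on A (\<lambda>x. deriv St ((x - c) / e) / e)"
  by (intro continuous_intros continuous_on_compose2[OF dSt_cont[of UNIV]]) auto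

lemma L1:
  assumes c: "0 < c" "c < T" and v: "continuous_on {0..T} v"
  shows "((\<lambda>e. integral {0..T} (\<lambda>x. v x * (deriv St ((x - c) / e) / e))) \<longlongrightarrow> v c) (at_right 0)"
proof (rule tendstoI)
  fix \<eta> :: real assume eta: "\<eta> > 0"
  have "c \<in> {0..T}" using c by auto
  with v obtain d where d: "d > 0" and dd: "\<And>x. x \<in> {0..T} \<Longrightarrow> dist x c < d \<Longrightarrow> dist (v x) (v c) < \<eta>/2"
    unfolding continuous_on_iff by (metis eta half_gt_zero)
  have "eventually (\<lambda>e. e \<in> {0<..<min d (T - c)}) (at_right (0::real))"
    by (rule eventually_at_right_real) (use d c in auto)
  then show "eventually (\<lambda>e. dist (integral {0..T} (\<lambda>x. v x * (deriv St ((x - c) / e) / e))) (v c) < \<eta>) (at_right 0)"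
  proof (rule eventually_mono)
    fix e assume e: "e \<in> {0<..<min d (T - c)}"
    define D where "D x = deriv St ((x - c) / e) / e" for x
    have e0: "e > 0" using e by auto
    have Dcont: "continuous_on {0..T} D" unfolding D_def using e0 by (intro dSt_comp_cont) simp
    have Dnn: "D x \<ge> 0" for x unfolding D_def using dSt_nonneg e0 by simp
    have Dsupp: "c \<le> x \<and> x \<le> c + e" if "D x \<noteq> 0" for x
    proof -
      have "\<not> ((x - c) / e < 0 \<or> (x - c) / e > 1)" using that dSt_zero unfolding D_def by force
      then show ?thesis using e0 by (auto simp: divide_simps not_less)
    qed
    have "(D has_integral (St ((T - c) / e) - St ((0 - c) / e))) {0..T}"
      unfolding D_def
      by (rule fundamental_theorem_of_calculus) (use c in \<open>auto simp: has_real_derivative_iff_has_vector_derivative[symmetric] intro!: DERIV_subset[OF St_comp_deriv] e0\<close>)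
    moreover have "St ((T - c) / e) = 1" using e by (intro St_1) (auto simp: divide_simps)
    moreover have "St ((0 - c) / e) = 0" using e c by (intro St_0) (auto simp: divide_simps)
    ultimately have intD: "(D has_integral 1) {0..T}" by simp
    have vDint: "(\<lambda>x. v x * D x) integrable_on {0..T}"
      by (intro integrable_continuous_interval continuous_intros v Dcont)
    have "integral {0..T} (\<lambda>x. v x * D x) - v c = integral {0..T} (\<lambda>x. v x * D x) - integral {0..T} (\<lambda>x. v c * D x)"
      using intD by (simp add: integral_mult_right integral_unique)
    also have "\<dots> = integral {0..T} (\<lambda>x. (v x - v c) * D x)"
      using vDint intD integrable_on_mult_left[OF has_integral_integrable[OF intD], of "v c"] by (subst integral_diff[symmetric]) (auto simp: algebra_simps)
    finally have eq: "integral {0..T} (\<lambda>x. v x * D x) - v c = integral {0..T} (\<lambda>x. (v x - v c) * D x)" .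
    have "norm (integral {0..T} (\<lambda>x. (v x - v c) * D x)) \<le> integral {0..T} (\<lambda>x. \<eta>/2 * D x)"
    proof (rule integral_norm_bound_integral)
      show "(\<lambda>x. (v x - v c) * D x) integrable_on {0..T}"
        by (intro integrable_continuous_interval continuous_intros v Dcont)
      show "(\<lambda>x. \<eta>/2 * D x) integrable_on {0..T}"
        using intD by (intro integrable_on_mult_right has_integral_integrable)
      fix x assume x: "x \<in> {0..T}"
      show "norm ((v x - v c) * D x) \<le> \<eta>/2 * D x"
      proof (cases "D x = 0")
        case True then show ?thesis by simp
      next
        case False
        then have "c \<le> x \<and> x \<le> c + e" by (rule Dsupp)
        then have "dist x c < d" using e by (auto simp: dist_real_def)
        then have "\<bar>v x - v c\<bar> < \<eta>/2" using dd x by (auto simp: dist_real_def)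
        then show ?thesis using Dnn[of x] mult_right_mono[of "\<bar>v x - v c\<bar>" "\<eta>/2" "D x"] by (auto simp: abs_mult)
      qed
    qed
    also have "\<dots> = \<eta>/2" using intD by (simp add: integral_mult_right integral_unique)
    finally have "dist (integral {0..T} (\<lambda>x. v x * D x)) (v c) < \<eta>"
      using eq eta by (simp add: dist_real_def)
    then show "dist (integral {0..T} (\<lambda>x. v x * (deriv St ((x - c) / e) / e))) (v c) < \<eta>"
      by (simp only: D_def)
  qed
qed


lemma cont_meas: "continuous_on UNIV (f::real\<Rightarrow>real) \<Longrightarrow> f \<in> borel_measurable lborel"
  using borel_measurable_continuous_onI[of f] by simp

lemma lint_cont:
  assumes "continuous_on {0..T} (h::real\<Rightarrow>real)"
  shows "(LINT x:{0<..<T}|lborel. h x) = integral {0..T} h"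
proof -
  have "set_integrable lborel {0..T} h" by (rule borel_integrable_atLeastAtMost'[OF assms])
  then have "set_integrable lborel {0<..<T} h" by (rule set_integrable_subset) auto
  then have "(LINT x:{0<..<T}|lborel. h x) = integral {0<..<T} h" by (rule set_borel_integral_eq_integral)
  then show ?thesis by (simp add: integral_open_interval_real)
qed

lemma L2_integrable:
  assumes "L2 T g"
  shows "set_integrable lborel {0<..<T} g"
proof -
  have m: "(\<lambda>x. indicator {0<..<T} x *\<^sub>R g x) \<in> borel_measurable lborel"
    using assms by (simp add: L2_def set_borel_measurable_def)
  have i2: "set_integrable lborel {0<..<T} (\<lambda>x. (g x)\<^sup>2)" using assms by (simp add: L2_def)
  have i1: "set_integrable lborel {0<..<T} (\<lambda>x. 1::real)"
  proof -
    have "set_integrable lborel {0..T} (\<lambda>x. 1::real)" by (rule borel_integrable_atLeastAtMost') simp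
    then show ?thesis by (rule set_integrable_subset) auto
  qed
  have "set_integrable lborel {0<..<T} (\<lambda>x. 1 + (g x)\<^sup>2)"
    using set_integral_add(1)[OF i1 i2] by simp
  then have "integrable lborel (\<lambda>x. indicator {0<..<T} x *\<^sub>R (1 + (g x)\<^sup>2))"
    by (simp add: set_integrable_def)
  then show ?thesis unfolding set_integrable_def
  proof (rule Bochner_Integration.integrable_bound)
    show "(\<lambda>x. indicator {0<..<T} x *\<^sub>R g x) \<in> borel_measurable lborel" by (rule m)
    show "AE x in lborel. norm (indicator {0<..<T} x *\<^sub>R g x) \<le> norm (indicator {0<..<T} x *\<^sub>R (1 + (g x)\<^sup>2))"
    proof (rule AE_I2)
      fix x
      have "0 \<le> (\<bar>g x\<bar> - 1)\<^sup>2" by simp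
      also have "(\<bar>g x\<bar> - 1)\<^sup>2 = (g x)\<^sup>2 - 2 * \<bar>g x\<bar> + 1"
        by (simp add: power2_eq_square algebra_simps)
      finally have "\<bar>g x\<bar> \<le> 1 + (g x)\<^sup>2" using zero_le_power2[of "g x"] by linarith
      then show "norm (indicator {0<..<T} x *\<^sub>R g x) \<le> norm (indicator {0<..<T} x *\<^sub>R (1 + (g x)\<^sup>2))"
        by (cases "x \<in> {0<..<T}") auto
    qed
  qed
qed

lemma weak_ftc_inner:
  assumes ab: "0 < a" "a < b" "b < T" and v: "continuous_on {0..T} v"
    and wd: "is_weak_deriv T v g"
  shows "v b - v a = integral {a..b} g"
proof -
  define \<delta> where "\<delta> = (T - b) / 2"
  have \<delta>: "\<delta> > 0" "b + \<delta> < T" using ab by (auto simp: \<delta>_def field_simps)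
  define e where "e n = \<delta> * inverse (real (Suc n))" for n
  define phi where "phi n x = St ((x - a) / e n) - St ((x - b) / e n)" for n x
  have e_pos: "e n > 0" for n using \<delta> by (simp add: e_def)
  have e_le: "e n \<le> \<delta>" for n using \<delta> by (simp add: e_def field_simps)
  have e_lim: "e \<longlonglongrightarrow> 0"
    unfolding e_def by (rule tendsto_mult_right_zero[OF LIMSEQ_inverse_real_of_nat])
  have e_fl: "filterlim e (at_right 0) sequentially"
    unfolding filterlim_at
  proof
    show "\<forall>\<^sub>F n in sequentially. e n \<in> {0<..} \<and> e n \<noteq> 0"
      using e_pos by (intro always_eventually) (metis greaterThan_iff less_irrefl)
  qed (rule e_lim)
  have gint: "set_integrable lborel {0<..<T} g" using wd by (intro L2_integrable) (simp add: is_weak_deriv_def)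
  have dphi: "((phi n) has_real_derivative (deriv St ((x - a) / e n) / e n - deriv St ((x - b) / e n) / e n)) (at x)" for n x
    unfolding phi_def[abs_def] by (intro derivative_intros St_comp_deriv e_pos)
  have test: "test_fun T (phi n)" for n
  proof -
    have aff: "(\<lambda>x. (x - c) / e n) = (\<lambda>x. inverse (e n) * x + (- c * inverse (e n)))" for c
      by (rule ext) (simp add: divide_inverse algebra_simps)
    have "Cn m (phi n)" for m
    proof -
      have ca: "Cn m (\<lambda>x. (x - c) / e n)" for c by (subst aff) (rule Cn_affine)
      have "Cn m (\<lambda>x. St ((x - a) / e n) - St ((x - b) / e n))"
        by (intro Cn_minus Cn_compose[OF Cn_St] ca)
      then show ?thesis by (simp add: phi_def[abs_def])
    qed
    then have sm: "\<forall>m x. (deriv ^^ m) (phi n) differentiable (at x)" by (auto simp: Cn_def)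
    have "{x. phi n x \<noteq> 0} \<subseteq> {a..b + e n}"
    proof
      fix x assume x: "x \<in> {x. phi n x \<noteq> 0}"
      have "\<not> x < a"
      proof
        assume "x < a"
        then have "St ((x - a) / e n) = 0" "St ((x - b) / e n) = 0"
          using ab e_pos[of n] by (auto intro!: St_0 simp: divide_simps)
        then show False using x by (simp add: phi_def)
      qed
      moreover have "\<not> x > b + e n"
      proof
        assume "x > b + e n"
        then have "St ((x - a) / e n) = 1" "St ((x - b) / e n) = 1"
          using ab e_pos[of n] by (auto intro!: St_1 simp: divide_simps)
        then show False using x by (simp add: phi_def)
      qed
      ultimately show "x \<in> {a..b + e n}" by auto
    qed
    then have "closure {x. phi n x \<noteq> 0} \<subseteq> {a..b + e n}"
      by (intro closure_minimal) auto
    also have "\<dots> \<subseteq> {0<..<T}" using ab \<delta> e_le[of n] by auto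
    finally show ?thesis using sm by (simp add: test_fun_def)
  qed
  define Dc where "Dc c n x = deriv St ((x - c) / e n) / e n" for c n x
  have Dc_cont: "continuous_on A (Dc c n)" for A c n
    unfolding Dc_def using e_pos[of n] by (intro dSt_comp_cont) simp
  have weak: "(LINT x:{0<..<T}|lborel. v x * deriv (phi n) x) = - (LINT x:{0<..<T}|lborel. g x * phi n x)" for n
    using wd test by (simp add: is_weak_deriv_def)
  have lhs: "(LINT x:{0<..<T}|lborel. v x * deriv (phi n) x)
      = integral {0..T} (\<lambda>x. v x * Dc a n x) - integral {0..T} (\<lambda>x. v x * Dc b n x)" for n
  proof -
    have dd: "deriv (phi n) = (\<lambda>x. Dc a n x - Dc b n x)"
      using dphi by (intro ext DERIV_imp_deriv) (simp add: Dc_def)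
    have "(LINT x:{0<..<T}|lborel. v x * deriv (phi n) x) = integral {0..T} (\<lambda>x. v x * (Dc a n x - Dc b n x))"
      unfolding dd by (intro lint_cont continuous_intros v Dc_cont)
    also have "\<dots> = integral {0..T} (\<lambda>x. v x * Dc a n x - v x * Dc b n x)"
      by (simp add: algebra_simps)
    also have "\<dots> = integral {0..T} (\<lambda>x. v x * Dc a n x) - integral {0..T} (\<lambda>x. v x * Dc b n x)"
      by (intro integral_diff integrable_continuous_interval continuous_intros v Dc_cont)
    finally show ?thesis .
  qed
  have lim_c: "(\<lambda>n. integral {0..T} (\<lambda>x. v x * Dc c n x)) \<longlonglongrightarrow> v c" if "0 < c" "c < T" for c
  proof -
    have "((\<lambda>e. integral {0..T} (\<lambda>x. v x * (deriv St ((x - c) / e) / e))) \<longlongrightarrow> v c) (at_right 0)"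
      by (rule L1[OF that v])
    from filterlim_compose[OF this e_fl] show ?thesis by (simp add: Dc_def)
  qed
  have limL: "(\<lambda>n. LINT x:{0<..<T}|lborel. v x * deriv (phi n) x) \<longlonglongrightarrow> v a - v b"
    unfolding lhs using ab by (intro tendsto_diff lim_c) auto
  have gm: "(\<lambda>x. indicator {0<..<T} x *\<^sub>R g x) \<in> borel_measurable lborel"
    using wd by (simp add: is_weak_deriv_def L2_def set_borel_measurable_def)
  have phi_cont: "continuous_on UNIV (phi n)" for n
    using dphi by (intro continuous_at_imp_continuous_on ballI DERIV_continuous) 
  have limR: "(\<lambda>n. LINT x:{0<..<T}|lborel. g x * phi n x) \<longlonglongrightarrow> (LINT x:{a<..b}|lborel. g x)"
    unfolding set_lebesgue_integral_def
  proof (rule integral_dominated_convergence[where w="\<lambda>x. indicator {0<..<T} x * \<bar>g x\<bar>"])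
    have eqf: "(\<lambda>x. indicator {a<..b} x * (indicator {0<..<T} x *\<^sub>R g x)) = (\<lambda>x. indicator {a<..b} x *\<^sub>R g x)"
      using ab by (intro ext) (auto simp: indicator_def)
    show "(\<lambda>x. indicator {a<..b} x *\<^sub>R g x) \<in> borel_measurable lborel"
      unfolding eqf[symmetric] using gm by (intro borel_measurable_times) auto
    fix n
    have "(\<lambda>x. (indicator {0<..<T} x *\<^sub>R g x) * phi n x) \<in> borel_measurable lborel"
      using gm cont_meas[OF phi_cont] by (intro borel_measurable_times)
    then show "(\<lambda>x. indicator {0<..<T} x *\<^sub>R (g x * phi n x)) \<in> borel_measurable lborel"
      by (simp add: mult.assoc)
    show "AE x in lborel. norm (indicator {0<..<T} x *\<^sub>R (g x * phi n x)) \<le> indicator {0<..<T} x * \<bar>g x\<bar>"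
    proof (rule AE_I2)
      fix x
      have "\<bar>phi n x\<bar> \<le> 1" using St_bounds[of "(x - a) / e n"] St_bounds[of "(x - b) / e n"]
        by (simp add: phi_def)
      then have "\<bar>g x\<bar> * \<bar>phi n x\<bar> \<le> \<bar>g x\<bar>" by (simp add: mult_left_le)
      then show "norm (indicator {0<..<T} x *\<^sub>R (g x * phi n x)) \<le> indicator {0<..<T} x * \<bar>g x\<bar>"
        by (auto simp: indicator_def abs_mult)
    qed
  next
    show "integrable lborel (\<lambda>x. indicator {0<..<T} x * \<bar>g x\<bar>)"
      using set_integrable_abs[OF gint] by (simp add: set_integrable_def)
    show "AE x in lborel. (\<lambda>n. indicator {0<..<T} x *\<^sub>R (g x * phi n x)) \<longlonglongrightarrow> indicator {a<..b} x *\<^sub>R g x"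
    proof (rule AE_I2)
      fix x
      have ev: "eventually (\<lambda>n. e n < d) sequentially" if "d > 0" for d
        using order_tendstoD(2)[OF e_lim that] .
      have "(\<lambda>n. phi n x) \<longlonglongrightarrow> indicator {a<..b} x"
      proof (cases "x \<le> a")
        case True
        then have "phi n x = 0" for n using ab e_pos[of n]
          by (simp add: phi_def St_0 divide_simps)
        then show ?thesis using True by (simp add: indicator_def)
      next
        case False
        show ?thesis
        proof (cases "x \<le> b")
          case True
          have "eventually (\<lambda>n. phi n x = indicator {a<..b} x) sequentially"
          proof (rule eventually_mono[OF ev[of "x - a"]])
            show "0 < x - a" using False by simp
            fix n assume "e n < x - a"
            then have "St ((x - a) / e n) = 1" "St ((x - b) / e n) = 0"
              using True e_pos[of n] by (auto intro!: St_1 St_0 simp: divide_simps)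
            then show "phi n x = indicator {a<..b} x" using True False by (simp add: phi_def indicator_def)
          qed
          then show ?thesis by (rule tendsto_eventually)
        next
          case False2: False
          have "eventually (\<lambda>n. phi n x = indicator {a<..b} x) sequentially"
          proof (rule eventually_mono[OF ev[of "x - b"]])
            show "0 < x - b" using False2 by simp
            fix n assume "e n < x - b"
            then have "St ((x - a) / e n) = 1" "St ((x - b) / e n) = 1"
              using False2 ab e_pos[of n] by (auto intro!: St_1 simp: divide_simps)
            then show "phi n x = indicator {a<..b} x" using False2 by (simp add: phi_def indicator_def)
          qed
          then show ?thesis by (rule tendsto_eventually)
        qed
      qed
      then have "(\<lambda>n. indicator {0<..<T} x * (g x * phi n x)) \<longlonglongrightarrow> indicator {0<..<T} x * (g x * indicator {a<..b} x)"
        by (intro tendsto_mult tendsto_const)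
      moreover have "indicator {0<..<T} x * (g x * indicator {a<..b} x) = indicator {a<..b} x *\<^sub>R g x"
        using ab by (auto simp: indicator_def)
      ultimately show "(\<lambda>n. indicator {0<..<T} x *\<^sub>R (g x * phi n x)) \<longlonglongrightarrow> indicator {a<..b} x *\<^sub>R g x"
        by simp
    qed
  qed
  have "v a - v b = - (LINT x:{a<..b}|lborel. g x)"
  proof (rule LIMSEQ_unique[OF limL])
    show "(\<lambda>n. LINT x:{0<..<T}|lborel. v x * deriv (phi n) x) \<longlonglongrightarrow> - (LINT x:{a<..b}|lborel. g x)"
      unfolding weak by (intro tendsto_minus limR)
  qed
  moreover have "(LINT x:{a<..b}|lborel. g x) = integral {a<..b} g"
    by (rule set_borel_integral_eq_integral(2), rule set_integrable_subset[OF gint]) (use ab in auto)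
  moreover have "integral {a<..b} g = integral {a..b} g"
  proof (rule integral_spike_set)
    have "{x \<in> {a<..b} - {a..b}. g x \<noteq> 0} = {}" by auto
    then show "negligible {x \<in> {a<..b} - {a..b}. g x \<noteq> 0}" by (metis negligible_empty)
    have "{x \<in> {a..b} - {a<..b}. g x \<noteq> 0} \<subseteq> {a}" by auto
    then show "negligible {x \<in> {a..b} - {a<..b}. g x \<noteq> 0}" by (rule negligible_subset[OF negligible_sing])
  qed
  ultimately show ?thesis by simp
qed


lemma weak_ftc:
  assumes T: "T > 0" and v: "continuous_on {0..T} v" and wd: "is_weak_deriv T v g"
  shows "g integrable_on {0..T}"
    and "\<And>x y. 0 \<le> x \<Longrightarrow> x \<le> y \<Longrightarrow> y \<le> T \<Longrightarrow> v y - v x = integral {x..y} g"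
proof -
  have gint: "set_integrable lborel {0<..<T} g" using wd by (intro L2_integrable) (simp add: is_weak_deriv_def)
  then have "g integrable_on {0<..<T}" by (rule set_borel_integral_eq_integral(1))
  then show gi: "g integrable_on {0..T}" by (simp add: integrable_on_open_interval_real)
  define G where "G t = integral {0..t} g" for t
  have Gc: "continuous_on {0..T} G" unfolding G_def by (rule indefinite_integral_continuous_1[OF gi])
  have Gd: "integral {x..y} g = G y - G x" if "0 \<le> x" "x \<le> y" "y \<le> T" for x y
  proof -
    have "g integrable_on {0..y}" using gi that by (intro integrable_on_subinterval[OF gi]) auto
    then have "integral {0..x} g + integral {x..y} g = integral {0..y} g"
      using that by (intro Henstock_Kurzweil_Integration.integral_combine) auto
    then show ?thesis by (simp add: G_def)
  qed
  define h where "h t = v t - G t" for t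
  have hc: "continuous_on (closure {0<..<T}) h"
    unfolding h_def closure_greaterThanLessThan[OF T] by (intro continuous_intros v Gc)
  have hconst: "h t = h (T/2)" if "t \<in> {0<..<T}" for t
  proof -
    consider "t < T/2" | "t = T/2" | "t > T/2" by linarith
    then show ?thesis
    proof cases
      case 1
      then have "v (T/2) - v t = integral {t..T/2} g" using that by (intro weak_ftc_inner[where T=T] v wd) auto
      also have "\<dots> = G (T/2) - G t" using 1 that by (intro Gd) auto
      finally show ?thesis by (simp add: h_def)
    next
      case 2 then show ?thesis by (simp only:)
    next
      case 3
      then have "v t - v (T/2) = integral {T/2..t} g" using that T by (intro weak_ftc_inner[where T=T] v wd) auto
      also have "\<dots> = G t - G (T/2)" using 3 that by (intro Gd) auto
      finally show ?thesis by (simp add: h_def)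
    qed
  qed
  have hall: "h t = h (T/2)" if "t \<in> {0..T}" for t
  proof (rule continuous_constant_on_closure[OF hc hconst])
    show "t \<in> closure {0<..<T}" using that by (simp only: closure_greaterThanLessThan[OF T])
  qed simp
  fix x y assume xy: "0 \<le> x" "x \<le> y" "y \<le> T"
  have "v y - v x = (h y + G y) - (h x + G x)" by (simp add: h_def)
  also have "\<dots> = G y - G x" using hall[of x] hall[of y] xy by simp
  also have "\<dots> = integral {x..y} g" using Gd[OF xy] by (rule sym)
  finally show "v y - v x = integral {x..y} g" .
qed


lemma wper_0: assumes "T > 0" "0 \<le> y" "y < T" shows "wper T y = w0 T y"
proof -
  have "\<lfloor>y / T\<rfloor> = 0" using assms by (simp add: floor_eq_iff divide_simps)
  then show ?thesis by (simp add: wper_def)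
qed

lemma wper_1: assumes "T > 0" "T \<le> y" "y < 2 * T" shows "wper T y = w0 T (y - T)"
proof -
  have "\<lfloor>y / T\<rfloor> = 1" using assms by (simp add: floor_eq_iff divide_simps)
  then show ?thesis by (simp add: wper_def)
qed

definition Ftri :: "real \<Rightarrow> real \<Rightarrow> real \<Rightarrow> real" where
  "Ftri T a x = (if x \<le> a then T/4 - a + x else if x \<le> a + T/2 then T/4 + a - x else x - a - 3*T/4)"

lemma tri:
  assumes T: "T > 0" and a: "0 \<le> a" "a \<le> T/2"
  shows "\<exists>x0\<in>{0..T}. \<forall>x\<in>{0..T}. Ftri T a x = wper T (x + x0)"
proof (cases "a \<le> T/4")
  case True
  show ?thesis
  proof (intro bexI ballI)
    show "T/4 - a \<in> {0..T}" using True a T by auto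
    fix x assume x: "x \<in> {0..T}"
    show "Ftri T a x = wper T (x + (T/4 - a))"
    proof (cases "x + (T/4 - a) < T")
      case True2: True
      have "wper T (x + (T/4 - a)) = w0 T (x + (T/4 - a))" using True2 x True T by (intro wper_0) auto
      then show ?thesis using True2 x True a T by (simp add: Ftri_def w0_def)
    next
      case False
      have "wper T (x + (T/4 - a)) = w0 T (x + (T/4 - a) - T)" using False x True a T by (intro wper_1) auto
      then show ?thesis using False x True a T by (simp add: Ftri_def w0_def)
    qed
  qed
next
  case False
  show ?thesis
  proof (intro bexI ballI)
    show "5*T/4 - a \<in> {0..T}" using False a T by auto
    fix x assume x: "x \<in> {0..T}"
    show "Ftri T a x = wper T (x + (5*T/4 - a))"
    proof (cases "x + (5*T/4 - a) < T")
      case True2: True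
      have "wper T (x + (5*T/4 - a)) = w0 T (x + (5*T/4 - a))" using True2 x False a T by (intro wper_0) auto
      then show ?thesis using True2 x False a T by (simp add: Ftri_def w0_def)
    next
      case False2: False
      have "wper T (x + (5*T/4 - a)) = w0 T (x + (5*T/4 - a) - T)" using False2 x False a T by (intro wper_1) auto
      then show ?thesis using False2 x False a T by (simp add: Ftri_def w0_def)
    qed
  qed
qed


lemma CS_int:
  fixes h :: "real \<Rightarrow> real"
  assumes xy: "x \<le> y" and hi: "h integrable_on {x..y}" and h2i: "(\<lambda>t. (h t)\<^sup>2) integrable_on {x..y}"
  shows "(integral {x..y} h)\<^sup>2 \<le> (y - x) * integral {x..y} (\<lambda>t. (h t)\<^sup>2)"
proof (cases "x = y")
  case True
  then show ?thesis by simp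
next
  case False
  then have lt: "x < y" using xy by simp
  define I where "I = integral {x..y} h"
  define I2 where "I2 = integral {x..y} (\<lambda>t. (h t)\<^sup>2)"
  define c where "c = I / (y - x)"
  have ci: "(\<lambda>t. c\<^sup>2) integrable_on {x..y}" by (rule integrable_const_ivl)
  have hi2: "(\<lambda>t. 2 * c * h t) integrable_on {x..y}" using hi by (rule integrable_on_mult_right)
  have eq: "(\<lambda>t. (h t - c)\<^sup>2) = (\<lambda>t. (h t)\<^sup>2 - 2 * c * h t + c\<^sup>2)"
    by (rule ext) (simp add: power2_eq_square algebra_simps)
  have sqi: "(\<lambda>t. (h t - c)\<^sup>2) integrable_on {x..y}"
    unfolding eq by (intro integrable_add integrable_diff h2i hi2 ci)
  have "0 \<le> integral {x..y} (\<lambda>t. (h t - c)\<^sup>2)"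
    by (rule integral_nonneg[OF sqi]) simp
  also have "integral {x..y} (\<lambda>t. (h t - c)\<^sup>2) = I2 - 2 * c * I + c\<^sup>2 * (y - x)"
    unfolding eq using lt
    by (simp add: integral_add integral_diff integrable_diff h2i hi2 ci integral_mult_right hi I_def I2_def)
  finally have "0 \<le> (y - x) * (I2 - 2 * c * I + c\<^sup>2 * (y - x))" using lt by simp
  also have "(y - x) * (I2 - 2 * c * I + c\<^sup>2 * (y - x)) = (y - x) * I2 - I\<^sup>2"
  proof -
    have cL: "c * (y - x) = I" using lt by (simp add: c_def)
    have "(y - x) * (I2 - 2 * c * I + c\<^sup>2 * (y - x)) = (y - x) * I2 - 2 * (c * (y - x)) * I + (c * (y - x))\<^sup>2"
      by (simp add: power2_eq_square algebra_simps)
    then show ?thesis unfolding cL by (simp add: power2_eq_square)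
  qed
  finally show ?thesis by (simp add: I_def I2_def)
qed


locale coreloc =
  fixes T :: real and u g :: "real \<Rightarrow> real"
  assumes T: "T > 0"
    and gi: "g integrable_on {0..T}"
    and agi: "(\<lambda>x. \<bar>g x\<bar>) integrable_on {0..T}"
    and g2i: "(\<lambda>x. (g x)\<^sup>2) integrable_on {0..T}"
    and ftc: "\<And>x y. 0 \<le> x \<Longrightarrow> x \<le> y \<Longrightarrow> y \<le> T \<Longrightarrow> u y - u x = integral {x..y} g"
    and per: "u 0 = u T"
begin

definition A where "A x y = integral {x..y} (\<lambda>t. \<bar>g t\<bar>)"

lemma sub_int: fixes f :: "real \<Rightarrow> real" assumes "0 \<le> x" "y \<le> T" "f integrable_on {0..T}" shows "f integrable_on {x..y}"
proof (rule integrable_on_subinterval[OF assms(3)])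
  show "{x..y} \<subseteq> {0..T}" using assms(1,2) by (simp add: subset_eq)
qed

lemma lip_A: assumes "0 \<le> x" "x \<le> y" "y \<le> T" shows "\<bar>u y - u x\<bar> \<le> A x y"
proof -
  have "norm (integral {x..y} g) \<le> integral {x..y} (\<lambda>t. \<bar>g t\<bar>)"
    by (rule integral_norm_bound_integral[OF sub_int[OF assms(1) assms(3) gi] sub_int[OF assms(1) assms(3) agi]]) simp
  then show ?thesis using ftc[OF assms] by (simp add: A_def)
qed

lemma A_add: assumes "0 \<le> x" "x \<le> y" "y \<le> z" "z \<le> T" shows "A x y + A y z = A x z"
proof -
  have "0 \<le> x" "z \<le> T" using assms by auto
  then show ?thesis unfolding A_def using assms(2,3)
    by (intro Henstock_Kurzweil_Integration.integral_combine sub_int[OF _ _ agi])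
qed

lemma A_total: assumes ab: "a \<in> {0..T}" "b \<in> {0..T}" "u a = M" "u b = - M" and M: "M \<ge> 0"
  shows "4 * M \<le> A 0 T"
proof -
  define p where "p = min a b"
  define q where "q = max a b"
  have pq: "0 \<le> p" "p \<le> q" "q \<le> T" using ab by (auto simp: p_def q_def)
  have vals: "(u p = M \<and> u q = - M) \<or> (u p = - M \<and> u q = M)"
  proof (cases "a \<le> b")
    case True then show ?thesis using ab by (simp add: p_def q_def min_def max_def)
  next
    case False then show ?thesis using ab by (simp add: p_def q_def min_def max_def)
  qed
  have d1: "\<bar>u q - u p\<bar> = 2 * M" using vals M by auto
  have d2: "\<bar>u p - u q\<bar> = 2 * M" using vals M by auto
  have 1: "2 * M \<le> A p q" using lip_A[OF pq] d1 by linarith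
  have "u p - u q = (u p - u 0) + (u T - u q)" using per by simp
  then have "\<bar>u p - u q\<bar> \<le> \<bar>u p - u 0\<bar> + \<bar>u T - u q\<bar>" by (metis abs_triangle_ineq)
  moreover have "\<bar>u p - u 0\<bar> \<le> A 0 p" using lip_A[of 0 p] pq by (simp add: abs_minus_commute)
  moreover have "\<bar>u T - u q\<bar> \<le> A q T" using lip_A[of q T] pq by simp
  ultimately have 2: "2 * M \<le> A 0 p + A q T" using d2 by linarith
  have 3: "A 0 p + A p q = A 0 q" using pq by (intro A_add) auto
  have 4: "A 0 q + A q T = A 0 T" using pq by (intro A_add) auto
  show ?thesis using 1 2 3 4 by linarith
qed

lemma ineq: assumes ab: "a \<in> {0..T}" "b \<in> {0..T}" "u a = M" "u b = - M" and M: "M \<ge> 0"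
  shows "16 * M\<^sup>2 / T \<le> integral {0..T} (\<lambda>x. (g x)\<^sup>2)"
proof -
  have L: "4 * M \<le> A 0 T" by (rule A_total[OF ab M])
  have "(A 0 T)\<^sup>2 \<le> (T - 0) * integral {0..T} (\<lambda>t. \<bar>g t\<bar>\<^sup>2)"
    unfolding A_def using T by (intro CS_int agi) (auto simp: g2i)
  then have cs: "(A 0 T)\<^sup>2 \<le> T * integral {0..T} (\<lambda>x. (g x)\<^sup>2)" by simp
  have "(4 * M)\<^sup>2 \<le> (A 0 T)\<^sup>2" using L M by (intro power_mono) auto
  then have "16 * M\<^sup>2 \<le> T * integral {0..T} (\<lambda>x. (g x)\<^sup>2)" using cs by (simp add: power2_eq_square)
  then show ?thesis using T by (simp add: divide_simps mult.commute)
qed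

lemma lipschitz: assumes ab: "a \<in> {0..T}" "b \<in> {0..T}" "u a = M" "u b = - M" and M: "M > 0"
  and eq: "integral {0..T} (\<lambda>x. (g x)\<^sup>2) = 16 * M\<^sup>2 / T"
  and xy: "0 \<le> x" "x \<le> y" "y \<le> T"
  shows "\<bar>u y - u x\<bar> \<le> 4 * M / T * (y - x)"
proof -
  define k where "k = 4 * M / T"
  have k: "k > 0" "k * T = 4 * M" using M T by (auto simp: k_def)
  have I2: "integral {0..T} (\<lambda>x. (g x)\<^sup>2) = k\<^sup>2 * T"
    using eq T by (simp add: k_def power2_eq_square field_simps)
  have L: "k * T \<le> A 0 T" using A_total[OF ab] k M by simp
  define h where "h t = \<bar>g t\<bar> - k" for t
  have hsq: "(\<lambda>t. (h t)\<^sup>2) = (\<lambda>t. (g t)\<^sup>2 - 2 * k * \<bar>g t\<bar> + k\<^sup>2)"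
    by (rule ext) (simp add: h_def power2_eq_square algebra_simps)
  have hsqi: "(\<lambda>t. (h t)\<^sup>2) integrable_on {0..T}"
    unfolding hsq by (intro integrable_add integrable_diff g2i integrable_on_mult_right agi integrable_const_ivl)
  have hi: "h integrable_on {0..T}"
    unfolding h_def[abs_def] by (intro integrable_diff agi integrable_const_ivl)
  have i1: "(\<lambda>t. (g t)\<^sup>2 - 2 * k * \<bar>g t\<bar>) integrable_on {0..T}"
    by (intro integrable_diff g2i integrable_on_mult_right agi)
  have "integral {0..T} (\<lambda>t. (h t)\<^sup>2) = integral {0..T} (\<lambda>t. (g t)\<^sup>2 - 2 * k * \<bar>g t\<bar>) + integral {0..T} (\<lambda>t. k\<^sup>2)"
    unfolding hsq by (rule integral_add[OF i1 integrable_const_ivl])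
  also have "integral {0..T} (\<lambda>t. (g t)\<^sup>2 - 2 * k * \<bar>g t\<bar>) = integral {0..T} (\<lambda>t. (g t)\<^sup>2) - integral {0..T} (\<lambda>t. 2 * k * \<bar>g t\<bar>)"
    by (rule integral_diff[OF g2i integrable_on_mult_right[OF agi]])
  also have "integral {0..T} (\<lambda>t. 2 * k * \<bar>g t\<bar>) = 2 * k * A 0 T"
    by (simp add: A_def)
  also have "integral {0..T} (\<lambda>t. k\<^sup>2) = k\<^sup>2 * T" using T by simp
  finally have "integral {0..T} (\<lambda>t. (h t)\<^sup>2) = k\<^sup>2 * T - 2 * k * A 0 T + k\<^sup>2 * T"
    unfolding I2 .
  also have "\<dots> \<le> 0"
  proof -
    have "2 * k * (k * T) \<le> 2 * k * A 0 T" using L k by (intro mult_left_mono) auto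
    then show ?thesis by (simp add: power2_eq_square algebra_simps)
  qed
  finally have Q: "integral {0..T} (\<lambda>t. (h t)\<^sup>2) \<le> 0" .
  have sub: "{x..y} \<subseteq> {0..T}" using xy by (simp add: subset_eq)
  have "integral {x..y} (\<lambda>t. (h t)\<^sup>2) \<le> integral {0..T} (\<lambda>t. (h t)\<^sup>2)"
    by (rule integral_subset_le[OF sub sub_int[OF xy(1) xy(3) hsqi] hsqi]) simp
  with Q have q: "integral {x..y} (\<lambda>t. (h t)\<^sup>2) \<le> 0" by simp
  have "(integral {x..y} h)\<^sup>2 \<le> (y - x) * integral {x..y} (\<lambda>t. (h t)\<^sup>2)"
    by (rule CS_int[OF xy(2) sub_int[OF xy(1) xy(3) hi] sub_int[OF xy(1) xy(3) hsqi]])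
  also have "\<dots> \<le> 0" using q xy by (simp add: mult_nonneg_nonpos)
  finally have "integral {x..y} h = 0" by simp
  moreover have "integral {x..y} h = A x y - k * (y - x)"
    unfolding h_def A_def using xy by (simp add: integral_diff[OF sub_int[OF xy(1) xy(3) agi] integrable_const_ivl])
  ultimately have "A x y = k * (y - x)" by simp
  then show ?thesis using lip_A[OF xy] by (simp add: k_def)
qed

lemma eq_case:
  assumes ab: "a \<in> {0..T}" "b \<in> {0..T}" "u a = M" "u b = - M" and M: "M > 0"
    and eq: "integral {0..T} (\<lambda>x. (g x)\<^sup>2) = 16 * M\<^sup>2 / T" and lt: "a < b"
  shows "\<exists>x0\<in>{0..T}. \<forall>x\<in>{0..T}. u x = (4 * M / T) * wper T (x + x0)"
proof -
  define k where "k = 4 * M / T"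
  have k: "k > 0" "k * T = 4 * M" using M T by (auto simp: k_def)
  have lip: "u y - u x \<le> k * y - k * x \<and> u x - u y \<le> k * y - k * x" if "0 \<le> x" "x \<le> y" "y \<le> T" for x y
  proof -
    have "\<bar>u y - u x\<bar> \<le> k * (y - x)" using lipschitz[OF ab M eq that] by (simp add: k_def)
    then have "\<bar>u y - u x\<bar> \<le> k * y - k * x" by (simp add: right_diff_distrib)
    then show ?thesis by arith
  qed
  have a0: "0 \<le> a" "a \<le> T" and b0: "0 \<le> b" "b \<le> T" using ab by auto
  have l1: "u a - u b \<le> k * b - k * a" using lip[of a b] a0 b0 lt by simp
  have l2: "u a - u 0 \<le> k * a - k * 0" using lip[of 0 a] a0 by simp
  have l3: "u T - u b \<le> k * T - k * b" using lip[of b T] b0 by simp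
  have e1: "k * b - k * a = 2 * M" using l1 l2 l3 k ab per by simp
  have e2: "u a - u 0 = k * a" using l1 l2 l3 k ab per by simp
  have e3: "u T - u b = k * T - k * b" using l1 l2 l3 k ab per by simp
  have "k * (b - a - T/2) = 0" using e1 k by (simp add: algebra_simps)
  then have bT: "b = a + T/2" using k by simp
  have ux: "u x = k * Ftri T a x" if x: "x \<in> {0..T}" for x
  proof -
    consider "x \<le> a" | "a < x" "x \<le> a + T/2" | "a + T/2 < x" by linarith
    then show ?thesis
    proof cases
      case 1
      have "u x - u 0 \<le> k * x - k * 0" using lip[of 0 x] x by (simp add: conj_commute)
      moreover have "u a - u x \<le> k * a - k * x" using lip[of x a] x 1 a0 by simp
      moreover have "k * Ftri T a x = k * T / 4 - k * a + k * x" using 1 by (simp add: Ftri_def algebra_simps)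
      ultimately show ?thesis using e2 k ab by linarith
    next
      case 2
      have "u a - u x \<le> k * x - k * a" using lip[of a x] x 2 a0 by simp
      moreover have "u x - u b \<le> k * b - k * x" using lip[of x b] x 2 b0 bT by simp
      moreover have "k * Ftri T a x = k * T / 4 + k * a - k * x" using 2 by (simp add: Ftri_def algebra_simps)
      ultimately show ?thesis using e1 k ab by linarith
    next
      case 3
      have "u x - u b \<le> k * x - k * b" using lip[of b x] x 3 bT b0 by simp
      moreover have "u T - u x \<le> k * T - k * x" using lip[of x T] x 3 bT b0 by simp
      moreover have "k * Ftri T a x = k * x - k * a - 3 * (k * T) / 4" using 3 T by (simp add: Ftri_def algebra_simps)
      moreover have "k * b = k * a + k * T / 2" using bT by (simp add: algebra_simps)
      ultimately show ?thesis using e3 k ab by linarith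
    qed
  qed
  obtain x0 where x0: "x0 \<in> {0..T}" "\<forall>x\<in>{0..T}. Ftri T a x = wper T (x + x0)"
    using tri[OF T a0(1)] bT b0 by auto
  show ?thesis
  proof (intro bexI ballI)
    fix x assume "x \<in> {0..T}"
    then show "u x = (4 * M / T) * wper T (x + x0)" using ux x0 by (simp add: k_def)
  qed (rule x0(1))
qed

end


lemma int_from_lborel:
  assumes "set_integrable lborel {0<..<T} (f::real\<Rightarrow>real)"
  shows "f integrable_on {0..T}" "(LINT x:{0<..<T}|lborel. f x) = integral {0..T} f"
proof -
  have "f integrable_on {0<..<T}" by (rule set_borel_integral_eq_integral(1)[OF assms])
  then show "f integrable_on {0..T}" by (simp add: integrable_on_open_interval_real)
  show "(LINT x:{0<..<T}|lborel. f x) = integral {0..T} f"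
    using set_borel_integral_eq_integral(2)[OF assms] by (simp add: integral_open_interval_real)
qed

theorem mainTheorem3:
  fixes T :: real
  assumes "T > 0"
  shows "(\<forall>u \<in> X1per T. (\<exists>x\<in>{0..T}. u x \<noteq> 0) \<longrightarrow> I1per T u \<ge> 16 / T)
    \<and> (\<forall>u \<in> X1per T. (\<exists>x\<in>{0..T}. u x \<noteq> 0) \<and> I1per T u = 16 / T \<longrightarrow>
         (\<exists>c x0. c \<noteq> 0 \<and> x0 \<in> {0..T} \<and> (\<forall>x\<in>{0..T}. u x = c * wper T (x + x0))))"
proof -
  have key: "16 / T \<le> I1per T u \<and> (I1per T u = 16 / T \<longrightarrow>
         (\<exists>c x0. c \<noteq> 0 \<and> x0 \<in> {0..T} \<and> (\<forall>x\<in>{0..T}. u x = c * wper T (x + x0))))"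
    if uX: "u \<in> X1per T" and nz: "\<exists>x\<in>{0..T}. u x \<noteq> 0" for u
  proof -
    have T: "T > 0" by (rule assms)
    have H: "H1 T u" and per: "u 0 = u T" and SI: "Sup (u ` {0..T}) + Inf (u ` {0..T}) = 0"
      using uX by (auto simp: X1per_def)
    have uc: "continuous_on {0..T} u" using H by (simp add: H1_def)
    have "\<exists>g. is_weak_deriv T u g" using H by (simp add: H1_def)
    then have wd: "is_weak_deriv T u (wderiv T u)" unfolding wderiv_def by (rule someI_ex)
    define g where "g = wderiv T u"
    have wdg: "is_weak_deriv T u g" using wd by (simp add: g_def)
    have gi: "g integrable_on {0..T}" and ftc: "\<And>x y. 0 \<le> x \<Longrightarrow> x \<le> y \<Longrightarrow> y \<le> T \<Longrightarrow> u y - u x = integral {x..y} g"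
      using weak_ftc[OF T uc wdg] by auto
    have gL: "set_integrable lborel {0<..<T} g" using wdg by (intro L2_integrable) (simp add: is_weak_deriv_def)
    have agi: "(\<lambda>x. \<bar>g x\<bar>) integrable_on {0..T}"
      using int_from_lborel(1)[OF set_integrable_abs[OF gL]] by simp
    have g2L: "set_integrable lborel {0<..<T} (\<lambda>x. (g x)\<^sup>2)" using wdg by (simp add: is_weak_deriv_def L2_def)
    have g2i: "(\<lambda>x. (g x)\<^sup>2) integrable_on {0..T}" by (rule int_from_lborel(1)[OF g2L])
    have num: "(LINT x:{0<..<T}|lborel. (wderiv T u x)\<^sup>2) = integral {0..T} (\<lambda>x. (g x)\<^sup>2)"
      using int_from_lborel(2)[OF g2L] by (simp add: g_def)
    interpret C: coreloc T u g by unfold_locales (use T gi agi g2i ftc per in auto)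
    have cpt: "compact {0..T}" "{0..T} \<noteq> {}" using T by auto
    obtain a where a: "a \<in> {0..T}" "\<forall>y\<in>{0..T}. u y \<le> u a"
      using continuous_attains_sup[OF cpt uc] by blast
    obtain b where b: "b \<in> {0..T}" "\<forall>y\<in>{0..T}. u b \<le> u y"
      using continuous_attains_inf[OF cpt uc] by blast
    have "Sup (u ` {0..T}) = u a" using a by (intro cSup_eq_maximum) auto
    moreover have "Inf (u ` {0..T}) = u b" using b by (intro cInf_eq_minimum) auto
    ultimately have ub: "u b = - u a" using SI by simp
    define M where "M = u a"
    have bnd: "\<bar>u y\<bar> \<le> M" if "y \<in> {0..T}" for y using a b that ub by (force simp: M_def)
    have M: "M > 0"
    proof -
      obtain x where "x \<in> {0..T}" "u x \<noteq> 0" using nz by blast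
      then show ?thesis using bnd[of x] by simp
    qed
    have sn: "supnorm T u = M"
      unfolding supnorm_def
    proof (rule cSup_eq_maximum)
      show "M \<in> (\<lambda>x. \<bar>u x\<bar>) ` {0..T}" using a M by (force simp: M_def)
      show "\<And>x. x \<in> (\<lambda>x. \<bar>u x\<bar>) ` {0..T} \<Longrightarrow> x \<le> M" using bnd by auto
    qed
    have I: "I1per T u = integral {0..T} (\<lambda>x. (g x)\<^sup>2) / M\<^sup>2"
      by (simp add: I1per_def num sn)
    have ua: "u a = M" and ub': "u b = - M" using ub by (auto simp: M_def)
    have ineq: "16 * M\<^sup>2 / T \<le> integral {0..T} (\<lambda>x. (g x)\<^sup>2)"
      using C.ineq[OF a(1) b(1) ua ub'] M by simp
    have part1: "16 / T \<le> I1per T u"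
      unfolding I using ineq M T by (simp add: divide_simps mult.commute)
    have part2: "\<exists>c x0. c \<noteq> 0 \<and> x0 \<in> {0..T} \<and> (\<forall>x\<in>{0..T}. u x = c * wper T (x + x0))"
      if eqI: "I1per T u = 16 / T"
    proof -
      have "integral {0..T} (\<lambda>x. (g x)\<^sup>2) = (integral {0..T} (\<lambda>x. (g x)\<^sup>2) / M\<^sup>2) * M\<^sup>2"
        using M by simp
      also have "\<dots> = 16 / T * M\<^sup>2" using eqI unfolding I by simp
      finally have eq: "integral {0..T} (\<lambda>x. (g x)\<^sup>2) = 16 * M\<^sup>2 / T" by simp
      consider "a < b" | "b < a" | "a = b" by linarith
      then show ?thesis
      proof cases
        case 1
        obtain x0 where "x0 \<in> {0..T}" "\<forall>x\<in>{0..T}. u x = (4 * M / T) * wper T (x + x0)"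
          using C.eq_case[OF a(1) b(1) ua ub' M eq 1] by blast
        then show ?thesis using M T by (intro exI[of _ "4 * M / T"] exI[of _ x0]) auto
      next
        case 2
        interpret D: coreloc T "\<lambda>x. - u x" "\<lambda>x. - g x"
        proof unfold_locales
          show "(\<lambda>x. - g x) integrable_on {0..T}" using gi by (rule integrable_neg)
          show "(\<lambda>x. \<bar>- g x\<bar>) integrable_on {0..T}" using agi by simp
          show "(\<lambda>x. (- g x)\<^sup>2) integrable_on {0..T}" using g2i by simp
          fix x y assume "0 \<le> x" "x \<le> y" "y \<le> T"
          then show "- u y - - u x = integral {x..y} (\<lambda>x. - g x)"
            using ftc[of x y] by (simp add: integral_neg)
        qed (use T per in auto)
        have eq': "integral {0..T} (\<lambda>x. (- g x)\<^sup>2) = 16 * M\<^sup>2 / T" using eq by simp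
        obtain x0 where x0: "x0 \<in> {0..T}" "\<forall>x\<in>{0..T}. - u x = (4 * M / T) * wper T (x + x0)"
          using D.eq_case[OF b(1) a(1) _ _ M eq' 2] ua ub' by auto
        show ?thesis
        proof -
          have "\<forall>x\<in>{0..T}. u x = - (4 * M / T) * wper T (x + x0)"
          proof
            fix x assume "x \<in> {0..T}"
            then have "- u x = (4 * M / T) * wper T (x + x0)" using x0(2) by blast
            then show "u x = - (4 * M / T) * wper T (x + x0)" by simp
          qed
          moreover have "- (4 * M / T) \<noteq> 0" using M T by simp
          ultimately show ?thesis using x0(1) by blast
        qed
      next
        case 3
        then show ?thesis using ua ub' M by simp
      qed
    qed
    show ?thesis using part1 part2 by blast
  qed
  show ?thesis using key by blast
qed


end
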